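(* Let $G$ be a countable group, and identify the power set $\mathbf{P}_G$ with $\{0,1\}^G$ (via characteristic functions) carrying the product topology. Then, as subsets of $\mathbf{P}_G$: the family $\mathbf{L}_G$ of large subsets is $F_\sigma$; the family $\mathbf{T}_G$ of thick subsets is $G_\delta$; the family $\mathbf{PT}_G$ of prethick subsets is $G_{\delta\sigma}$; and the families $\mathbf{S}_G$ of small subsets and $\mathbf{EL}_G$ of extralarge subsets are $F_{\sigma\delta}$.
   Context: Let $G$ be a group and $\mathcal{F}_G$ the family of finite subsets of $G$. A subset $A\subseteq G$ is large if $G=FA$ for some $F\in\mathcal{F}_G$; small if $L\setminus A$ is large for every large $L\subseteq G$; extralarge if $G\setminus A$ is small; thick if for every $F\in\mathcal{F}_G$ there is $a\in A$ with $Fa\subseteq A$; prethick if $FA$ is thick for some $F\in\mathcal{F}_G$. The topology on $\mathbf{P}_G$ has as subbase the sets $\{X: K\subseteq X\}$ and $\{X: X\cap K=\emptyset\}$ for finite $K\subseteq G$. *)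

theory Defs
  imports "HOL-Analysis.Analysis" "HOL-Algebra.Coset"
begin

definition large_set :: "('a, 'b) monoid_scheme \<Rightarrow> 'a set \<Rightarrow> bool" where
  "large_set G A \<longleftrightarrow> (\<exists>F. finite F \<and> F \<subseteq> carrier G \<and> carrier G = F <#>\<^bsub>G\<^esub> A)"

definition small_set :: "('a, 'b) monoid_scheme \<Rightarrow> 'a set \<Rightarrow> bool" where
  "small_set G A \<longleftrightarrow> (\<forall>L. L \<subseteq> carrier G \<longrightarrow> large_set G L \<longrightarrow> large_set G (L - A))"

definition extralarge_set :: "('a, 'b) monoid_scheme \<Rightarrow> 'a set \<Rightarrow> bool" where
  "extralarge_set G A \<longleftrightarrow> small_set G (carrier G - A)"

definition thick_set :: "('a, 'b) monoid_scheme \<Rightarrow> 'a set \<Rightarrow> bool" where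
  "thick_set G A \<longleftrightarrow> (\<forall>F. finite F \<and> F \<subseteq> carrier G \<longrightarrow> (\<exists>a\<in>A. F #>\<^bsub>G\<^esub> a \<subseteq> A))"

definition prethick_set :: "('a, 'b) monoid_scheme \<Rightarrow> 'a set \<Rightarrow> bool" where
  "prethick_set G A \<longleftrightarrow> (\<exists>F. finite F \<and> F \<subseteq> carrier G \<and> thick_set G (F <#>\<^bsub>G\<^esub> A))"

text \<open>The topology on the power set of G (identified with the product space of 2-point
  discrete spaces) given by the subbase of sets {X. K \<subseteq> X} and {X. X \<inter> K = {}}, K finite.\<close>
definition PG_topology :: "('a, 'b) monoid_scheme \<Rightarrow> 'a set topology" where
  "PG_topology G = topology_generated_by
     ((\<lambda>K. {X. X \<subseteq> carrier G \<and> K \<subseteq> X}) ` {K. finite K \<and> K \<subseteq> carrier G}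
      \<union> (\<lambda>K. {X. X \<subseteq> carrier G \<and> X \<inter> K = {}}) ` {K. finite K \<and> K \<subseteq> carrier G})"

definition gdelta_sigma_in :: "'x topology \<Rightarrow> 'x set \<Rightarrow> bool" where
  "gdelta_sigma_in X S \<longleftrightarrow> (countable union_of gdelta_in X) S"

definition fsigma_delta_in :: "'x topology \<Rightarrow> 'x set \<Rightarrow> bool" where
  "fsigma_delta_in X S \<longleftrightarrow> ((countable intersection_of fsigma_in X) relative_to topspace X) S"

definition LG where "LG G = {A. A \<subseteq> carrier G \<and> large_set G A}"
definition SG where "SG G = {A. A \<subseteq> carrier G \<and> small_set G A}"
definition ELG where "ELG G = {A. A \<subseteq> carrier G \<and> extralarge_set G A}"
definition TG where "TG G = {A. A \<subseteq> carrier G \<and> thick_set G A}"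
definition PTG where "PTG G = {A. A \<subseteq> carrier G \<and> prethick_set G A}"

end

theory Submission imports Defs begin

context group begin

lemma cancel1 [simp]: "f \<in> carrier G \<Longrightarrow> a \<in> carrier G \<Longrightarrow> inv f \<otimes> (f \<otimes> a) = a"
  by (simp add: m_assoc[symmetric])
lemma cancel2 [simp]: "f \<in> carrier G \<Longrightarrow> a \<in> carrier G \<Longrightarrow> f \<otimes> (inv f \<otimes> a) = a"
  by (simp add: m_assoc[symmetric])

lemma mem_sm: "A \<subseteq> carrier G \<Longrightarrow> F \<subseteq> carrier G \<Longrightarrow>
  x \<in> F <#> A \<longleftrightarrow> x \<in> carrier G \<and> (\<exists>f\<in>F. inv f \<otimes> x \<in> A)"
  unfolding set_mult_def
proof (safe, goal_cases)
  case (1 f a) then show ?case by auto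
next
  case (2 f a)
  then have "f \<in> carrier G" "a \<in> carrier G" by auto
  with 2 show ?case by (intro bexI[of _ f]) auto
next
  case (3 f)
  then have "f \<in> carrier G" "x \<in> carrier G" by auto
  then have "x = f \<otimes> (inv f \<otimes> x)" by simp
  with 3 show ?case by blast
qed

lemma sm_sub: "A \<subseteq> carrier G \<Longrightarrow> F \<subseteq> carrier G \<Longrightarrow> F <#> A \<subseteq> carrier G"
  using mem_sm by blast

lemma large_iff: "A \<subseteq> carrier G \<Longrightarrow> large_set G A \<longleftrightarrow>
   (\<exists>F. finite F \<and> F \<subseteq> carrier G \<and> (\<forall>g\<in>carrier G. \<exists>f\<in>F. inv f \<otimes> g \<in> A))"
  unfolding large_set_def
proof (intro iffI; elim exE conjE)
  fix F assume A: "A \<subseteq> carrier G" and F: "finite F" "F \<subseteq> carrier G" and e: "carrier G = F <#> A"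
  have "\<forall>g\<in>carrier G. \<exists>f\<in>F. inv f \<otimes> g \<in> A"
  proof
    fix g assume "g \<in> carrier G"
    then have "g \<in> F <#> A" using e by simp
    then show "\<exists>f\<in>F. inv f \<otimes> g \<in> A" using mem_sm[OF A F(2)] by simp
  qed
  with F show "\<exists>F. finite F \<and> F \<subseteq> carrier G \<and> (\<forall>g\<in>carrier G. \<exists>f\<in>F. inv f \<otimes> g \<in> A)"
    by blast
next
  fix F assume A: "A \<subseteq> carrier G" and F: "finite F" "F \<subseteq> carrier G"
    and h: "\<forall>g\<in>carrier G. \<exists>f\<in>F. inv f \<otimes> g \<in> A"
  have "carrier G \<subseteq> F <#> A"
  proof
    fix g assume "g \<in> carrier G"
    then show "g \<in> F <#> A" using h mem_sm[OF A F(2)] by simp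
  qed
  then have "carrier G = F <#> A" using sm_sub[OF A F(2)] by (rule antisym)
  with F show "\<exists>F. finite F \<and> F \<subseteq> carrier G \<and> carrier G = F <#> A" by blast
qed

lemma small_union: "small_set G A \<Longrightarrow> small_set G B \<Longrightarrow> small_set G (A \<union> B)"
  unfolding small_set_def
proof (intro allI impI)
  fix L assume a: "\<forall>L. L \<subseteq> carrier G \<longrightarrow> large_set G L \<longrightarrow> large_set G (L - A)"
    and b: "\<forall>L. L \<subseteq> carrier G \<longrightarrow> large_set G L \<longrightarrow> large_set G (L - B)"
    and L: "L \<subseteq> carrier G" "large_set G L"
  have "large_set G (L - A)" using a L by blast
  moreover have "L - A \<subseteq> carrier G" using L by blast
  ultimately have "large_set G ((L - A) - B)" using b by blast
  moreover have "(L - A) - B = L - (A \<union> B)" by blast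
  ultimately show "large_set G (L - (A \<union> B))" by simp
qed

lemma small_translate:
  assumes s: "small_set G A" and A: "A \<subseteq> carrier G" and f: "f \<in> carrier G"
  shows "small_set G ({f} <#> A)"
  unfolding small_set_def
proof (intro allI impI)
  fix L assume L: "L \<subseteq> carrier G" "large_set G L"
  then obtain K where K: "finite K" "K \<subseteq> carrier G" "\<forall>g\<in>carrier G. \<exists>k\<in>K. inv k \<otimes> g \<in> L"
    using large_iff[OF L(1)] L(2) by blast
  define L' where "L' = {inv f} <#> L"
  have fi: "{inv f} \<subseteq> carrier G" using f by simp
  have L': "L' \<subseteq> carrier G" unfolding L'_def using sm_sub[OF L(1) fi] .
  have mL': "x \<in> L' \<longleftrightarrow> x \<in> carrier G \<and> f \<otimes> x \<in> L" for x
    unfolding L'_def mem_sm[OF L(1) fi] using f by simp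
  have "large_set G L'"
    unfolding large_iff[OF L']
  proof (intro exI[of _ "(\<lambda>k. k \<otimes> f) ` K"] conjI ballI)
    show "finite ((\<lambda>k. k \<otimes> f) ` K)" using K by simp
    show "(\<lambda>k. k \<otimes> f) ` K \<subseteq> carrier G"
    proof
      fix x assume "x \<in> (\<lambda>k. k \<otimes> f) ` K"
      then obtain k where "k \<in> K" "x = k \<otimes> f" by blast
      then show "x \<in> carrier G" using K(2) f by (simp add: subset_iff)
    qed
    fix g assume g: "g \<in> carrier G"
    then obtain k where k: "k \<in> K" "inv k \<otimes> g \<in> L" using K by blast
    have kc: "k \<in> carrier G" using k K(2) by blast
    have "inv (k \<otimes> f) \<otimes> g = inv f \<otimes> (inv k \<otimes> g)"
      using kc f g by (simp add: inv_mult_group m_assoc)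
    moreover have "inv f \<otimes> (inv k \<otimes> g) \<in> L'"
      unfolding mL' using k kc f g by simp
    ultimately have "inv (k \<otimes> f) \<otimes> g \<in> L'" by simp
    moreover have "k \<otimes> f \<in> (\<lambda>k. k \<otimes> f) ` K" using k by blast
    ultimately show "\<exists>x\<in>(\<lambda>k. k \<otimes> f) ` K. inv x \<otimes> g \<in> L'" by blast
  qed
  then have "large_set G (L' - A)" using s L' unfolding small_set_def by blast
  moreover have L'A: "L' - A \<subseteq> carrier G" using L' by blast
  ultimately obtain E where E: "finite E" "E \<subseteq> carrier G" "\<forall>g\<in>carrier G. \<exists>e\<in>E. inv e \<otimes> g \<in> L' - A"
    using large_iff[OF L'A] by blast
  have LA: "L - ({f} <#> A) \<subseteq> carrier G" using L by blast
  have fs: "{f} \<subseteq> carrier G" using f by simp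
  show "large_set G (L - ({f} <#> A))"
    unfolding large_iff[OF LA]
  proof (intro exI[of _ "(\<lambda>e. e \<otimes> inv f) ` E"] conjI ballI)
    show "finite ((\<lambda>e. e \<otimes> inv f) ` E)" using E by simp
    show "(\<lambda>e. e \<otimes> inv f) ` E \<subseteq> carrier G"
    proof
      fix x assume "x \<in> (\<lambda>e. e \<otimes> inv f) ` E"
      then obtain e where "e \<in> E" "x = e \<otimes> inv f" by blast
      then show "x \<in> carrier G" using E(2) f by (simp add: subset_iff)
    qed
    fix g assume g: "g \<in> carrier G"
    then obtain e where e: "e \<in> E" "inv e \<otimes> g \<in> L' - A" using E by blast
    have ec: "e \<in> carrier G" using e E(2) by blast
    have eq: "inv (e \<otimes> inv f) \<otimes> g = f \<otimes> (inv e \<otimes> g)"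
      using ec f g by (simp add: inv_mult_group m_assoc)
    have y: "inv e \<otimes> g \<in> carrier G" "inv e \<otimes> g \<notin> A" using e ec g by auto
    have inL: "f \<otimes> (inv e \<otimes> g) \<in> L" using e(2) mL' by blast
    have nA: "f \<otimes> (inv e \<otimes> g) \<notin> {f} <#> A"
      unfolding mem_sm[OF A fs] using f y by simp
    have "inv (e \<otimes> inv f) \<otimes> g \<in> L - ({f} <#> A)" using inL nA by (simp add: eq)
    moreover have "e \<otimes> inv f \<in> (\<lambda>e. e \<otimes> inv f) ` E" using e by blast
    ultimately show "\<exists>x\<in>(\<lambda>e. e \<otimes> inv f) ` E. inv x \<otimes> g \<in> L - ({f} <#> A)" by blast
  qed
qed

lemma small_mult:
  assumes s: "small_set G A" and A: "A \<subseteq> carrier G" and F: "finite F" "F \<subseteq> carrier G"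
  shows "small_set G (F <#> A)"
  using F
proof (induction F rule: finite_induct)
  case empty
  then show ?case by (simp add: small_set_def set_mult_def)
next
  case (insert f F)
  have "insert f F <#> A = ({f} <#> A) \<union> (F <#> A)" unfolding set_mult_def by auto
  then show ?case using insert small_union small_translate[OF s A] by auto
qed

lemma large_carrier: "large_set G (carrier G)"
  unfolding large_iff[OF order_refl] by (intro exI[of _ "{\<one>}"]) auto

lemma small_iff:
  assumes A: "A \<subseteq> carrier G"
  shows "small_set G A \<longleftrightarrow> (\<forall>F. finite F \<and> F \<subseteq> carrier G \<longrightarrow> large_set G (carrier G - (F <#> A)))"
proof
  assume s: "small_set G A"
  show "\<forall>F. finite F \<and> F \<subseteq> carrier G \<longrightarrow> large_set G (carrier G - (F <#> A))"
    using small_mult[OF s A] large_carrier unfolding small_set_def by blast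
next
  assume H: "\<forall>F. finite F \<and> F \<subseteq> carrier G \<longrightarrow> large_set G (carrier G - (F <#> A))"
  show "small_set G A" unfolding small_set_def
  proof (intro allI impI)
    fix L assume L: "L \<subseteq> carrier G" "large_set G L"
    then obtain K where K: "finite K" "K \<subseteq> carrier G" "\<forall>g\<in>carrier G. \<exists>k\<in>K. inv k \<otimes> g \<in> L"
      using large_iff[OF L(1)] L(2) by blast
    have "large_set G (carrier G - (K <#> A))" using H K by auto
    then obtain E where E: "finite E" "E \<subseteq> carrier G" "\<forall>g\<in>carrier G. \<exists>e\<in>E. inv e \<otimes> g \<in> carrier G - (K <#> A)"
      using large_iff[of "carrier G - (K <#> A)"] Diff_subset by blast
    have LA: "L - A \<subseteq> carrier G" using L by auto
    show "large_set G (L - A)" unfolding large_iff[OF LA]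
    proof (intro exI[of _ "(\<lambda>(e,k). e \<otimes> k) ` (E \<times> K)"] conjI ballI)
      show "finite ((\<lambda>(e,k). e \<otimes> k) ` (E \<times> K))" using E K by auto
      show "(\<lambda>(e,k). e \<otimes> k) ` (E \<times> K) \<subseteq> carrier G" using E K by auto
      fix g assume g: "g \<in> carrier G"
      then obtain e where e: "e \<in> E" "inv e \<otimes> g \<in> carrier G - (K <#> A)" using E by auto
      define y where "y = inv e \<otimes> g"
      have y: "y \<in> carrier G" using e E g y_def by auto
      then obtain k where k: "k \<in> K" "inv k \<otimes> y \<in> L" using K by auto
      have ny: "y \<notin> K <#> A" using e unfolding y_def by blast
      have "inv k \<otimes> y \<notin> A" using ny k y mem_sm[OF A K(2), of y] by blast
      moreover have "inv (e \<otimes> k) \<otimes> g = inv k \<otimes> y"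
        using e E k K g by (simp add: y_def inv_mult_group m_assoc subset_iff)
      ultimately show "\<exists>x\<in>(\<lambda>(e,k). e \<otimes> k) ` (E \<times> K). inv x \<otimes> g \<in> L - A"
        using e k by (intro bexI[of _ "e \<otimes> k"]) auto
    qed
  qed
qed

end

definition clopen_in :: "'x topology \<Rightarrow> 'x set \<Rightarrow> bool" where
  "clopen_in T S \<longleftrightarrow> openin T S \<and> closedin T S"

lemma clopen_diff: "clopen_in T S \<Longrightarrow> clopen_in T U \<Longrightarrow> clopen_in T (S - U)"
  unfolding clopen_in_def by auto

lemma clopen_UN: assumes "finite I" "\<And>i. i \<in> I \<Longrightarrow> clopen_in T (U i)"
  shows "clopen_in T (\<Union>i\<in>I. U i)"
proof -
  have "openin T (\<Union>(U ` I))"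
    by (rule openin_Union) (use assms(2) in \<open>auto simp: clopen_in_def\<close>)
  moreover have "closedin T (\<Union>(U ` I))"
    by (rule closedin_Union) (use assms in \<open>auto simp: clopen_in_def\<close>)
  ultimately show ?thesis unfolding clopen_in_def by simp
qed

lemma clopen_topspace: "clopen_in T (topspace T)"
  unfolding clopen_in_def by simp

lemma clopen_INT: assumes "finite I" "\<And>i. i \<in> I \<Longrightarrow> clopen_in T (U i)"
  shows "clopen_in T (topspace T \<inter> (\<Inter>i\<in>I. U i))"
proof -
  have eq: "topspace T \<inter> (\<Inter>i\<in>I. U i) = topspace T - (\<Union>i\<in>I. topspace T - U i)" by blast
  have "clopen_in T (\<Union>i\<in>I. topspace T - U i)"
    by (rule clopen_UN[OF assms(1)]) (rule clopen_diff[OF clopen_topspace assms(2)])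
  then show ?thesis unfolding eq by (rule clopen_diff[OF clopen_topspace])
qed

lemma closed_INT: assumes "\<And>i. i \<in> I \<Longrightarrow> closedin T (U i)"
  shows "closedin T (topspace T \<inter> (\<Inter>i\<in>I. U i))"
proof -
  have eq: "topspace T \<inter> (\<Inter>i\<in>I. U i) = \<Inter>(insert (topspace T) (U ` I))" by blast
  show ?thesis unfolding eq
    by (rule closedin_Inter) (use assms in auto)
qed

lemma gdelta_INT: assumes "countable I" "\<And>i. i \<in> I \<Longrightarrow> openin T (U i)"
  shows "gdelta_in T (topspace T \<inter> (\<Inter>i\<in>I. U i))"
proof -
  have eq: "topspace T \<inter> (\<Inter>i\<in>I. U i) = \<Inter>(insert (topspace T) (U ` I))" by blast
  show ?thesis unfolding eq
    by (rule gdelta_in_Inter) (use assms in \<open>auto intro: open_imp_gdelta_in\<close>)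
qed

lemma fsigma_UN: assumes "countable I" "\<And>i. i \<in> I \<Longrightarrow> closedin T (U i)"
  shows "fsigma_in T (\<Union>i\<in>I. U i)"
  using assms by (intro fsigma_in_Union) (auto intro: closed_imp_fsigma_in)

lemma fsigma_delta_INT: assumes "countable I" "\<And>i. i \<in> I \<Longrightarrow> fsigma_in T (U i)"
  shows "fsigma_delta_in T (topspace T \<inter> (\<Inter>i\<in>I. U i))"
  unfolding fsigma_delta_in_def relative_to_def
  using assms by (intro exI[of _ "\<Inter>i\<in>I. U i"] conjI refl countable_intersection_of_INT countable_intersection_of_inc)

lemma gdelta_sigma_UN: assumes "countable I" "\<And>i. i \<in> I \<Longrightarrow> gdelta_in T (U i)"
  shows "gdelta_sigma_in T (\<Union>i\<in>I. U i)"
  unfolding gdelta_sigma_in_def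
  using assms by (intro countable_union_of_UN countable_union_of_inc)

context group begin

definition inS where "inS x = {X. X \<subseteq> carrier G \<and> x \<in> X}"
definition outS where "outS x = {X. X \<subseteq> carrier G \<and> x \<notin> X}"

lemma topsp: "topspace (PG_topology G) = Pow (carrier G)"
proof -
  have m: "Pow (carrier G) \<in> (\<lambda>K. {X. X \<subseteq> carrier G \<and> K \<subseteq> X}) ` {K. finite K \<and> K \<subseteq> carrier G}"
    by (rule image_eqI[of _ _ "{}"]) auto
  show ?thesis unfolding PG_topology_def topology_generated_by_topspace
  proof (rule equalityI)
    show "Pow (carrier G) \<subseteq> \<Union>((\<lambda>K. {X. X \<subseteq> carrier G \<and> K \<subseteq> X}) ` {K. finite K \<and> K \<subseteq> carrier G}
      \<union> (\<lambda>K. {X. X \<subseteq> carrier G \<and> X \<inter> K = {}}) ` {K. finite K \<and> K \<subseteq> carrier G})"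
      by (rule Union_upper) (rule UnI1[OF m])
    show "\<Union>((\<lambda>K. {X. X \<subseteq> carrier G \<and> K \<subseteq> X}) ` {K. finite K \<and> K \<subseteq> carrier G}
      \<union> (\<lambda>K. {X. X \<subseteq> carrier G \<and> X \<inter> K = {}}) ` {K. finite K \<and> K \<subseteq> carrier G}) \<subseteq> Pow (carrier G)"
      by (rule Union_least) auto
  qed
qed

lemma basis_open: "finite K \<Longrightarrow> K \<subseteq> carrier G \<Longrightarrow> openin (PG_topology G) {X. X \<subseteq> carrier G \<and> K \<subseteq> X}"
  unfolding PG_topology_def
  by (rule topology_generated_by_Basis, rule UnI1, rule image_eqI[OF refl]) simp

lemma basis_open2: "finite K \<Longrightarrow> K \<subseteq> carrier G \<Longrightarrow> openin (PG_topology G) {X. X \<subseteq> carrier G \<and> X \<inter> K = {}}"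
  unfolding PG_topology_def
  by (rule topology_generated_by_Basis, rule UnI2, rule image_eqI[OF refl]) simp

lemma clopen_inS: assumes "x \<in> carrier G" shows "clopen_in (PG_topology G) (inS x)"
proof -
  have o1: "openin (PG_topology G) (inS x)"
    using basis_open[of "{x}"] assms unfolding inS_def by simp
  have o2: "openin (PG_topology G) (outS x)"
    using basis_open2[of "{x}"] assms unfolding outS_def by simp
  have "inS x = topspace (PG_topology G) - outS x" unfolding topsp inS_def outS_def by blast
  then have "closedin (PG_topology G) (inS x)" using o2 by (simp add: closedin_diff)
  with o1 show ?thesis unfolding clopen_in_def by simp
qed

lemma clopen_outS: assumes "x \<in> carrier G" shows "clopen_in (PG_topology G) (outS x)"
proof -
  have "outS x = topspace (PG_topology G) - inS x" unfolding topsp inS_def outS_def by blast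
  then show ?thesis using clopen_inS[OF assms] clopen_topspace clopen_diff by metis
qed

end


context group begin

definition FS where "FS = {F. finite F \<and> F \<subseteq> carrier G}"

lemma FS_countable: "countable (carrier G) \<Longrightarrow> countable FS"
  unfolding FS_def by (rule countable_Collect_finite_subset)

lemma rc_fin: "finite F \<Longrightarrow> finite (F #> a)"
  unfolding r_coset_def by simp

lemma rc_sub: "F \<subseteq> carrier G \<Longrightarrow> a \<in> carrier G \<Longrightarrow> F #> a \<subseteq> carrier G"
  unfolding r_coset_def by auto

lemma L_part: assumes "countable (carrier G)" shows "fsigma_in (PG_topology G) (LG G)"
proof -
  let ?T = "PG_topology G"
  have eq: "LG G = (\<Union>F\<in>FS. topspace ?T \<inter> (\<Inter>g\<in>carrier G. \<Union>f\<in>F. inS (inv f \<otimes> g)))"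
  proof (rule Set.set_eqI)
    fix A
    show "A \<in> LG G \<longleftrightarrow> A \<in> (\<Union>F\<in>FS. topspace ?T \<inter> (\<Inter>g\<in>carrier G. \<Union>f\<in>F. inS (inv f \<otimes> g)))"
    proof (cases "A \<subseteq> carrier G")
      case True
      have lg: "large_set G A \<longleftrightarrow> (\<exists>F. finite F \<and> F \<subseteq> carrier G \<and> (\<forall>g\<in>carrier G. \<exists>f\<in>F. inv f \<otimes> g \<in> A))"
        by (rule large_iff[OF True])
      show ?thesis using True by (simp add: LG_def topsp inS_def FS_def lg)
    next
      case False
      then show ?thesis unfolding LG_def topsp by simp
    qed
  qed
  have "closedin ?T (topspace ?T \<inter> (\<Inter>g\<in>carrier G. \<Union>f\<in>F. inS (inv f \<otimes> g)))" if F: "F \<in> FS" for F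
  proof (rule closed_INT)
    fix g assume g: "g \<in> carrier G"
    have "clopen_in ?T (\<Union>f\<in>F. inS (inv f \<otimes> g))"
    proof (rule clopen_UN)
      show "finite F" using F unfolding FS_def by simp
      fix f assume "f \<in> F"
      then have "f \<in> carrier G" using F unfolding FS_def by blast
      then show "clopen_in ?T (inS (inv f \<otimes> g))" using g by (intro clopen_inS) simp
    qed
    then show "closedin ?T (\<Union>f\<in>F. inS (inv f \<otimes> g))" unfolding clopen_in_def by simp
  qed
  then show ?thesis unfolding eq using FS_countable[OF assms] by (intro fsigma_UN)
qed

end


context group begin

lemma T_part: assumes "countable (carrier G)" shows "gdelta_in (PG_topology G) (TG G)"
proof -
  let ?T = "PG_topology G"
  let ?U = "\<lambda>F. \<Union>a\<in>carrier G. {X. X \<subseteq> carrier G \<and> insert a (F #> a) \<subseteq> X}"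
  have eq: "TG G = topspace ?T \<inter> (\<Inter>F\<in>FS. ?U F)"
  proof (rule Set.set_eqI)
    fix A
    show "A \<in> TG G \<longleftrightarrow> A \<in> topspace ?T \<inter> (\<Inter>F\<in>FS. ?U F)"
    proof (cases "A \<subseteq> carrier G")
      case True
      have "(\<exists>a\<in>A. F #> a \<subseteq> A) \<longleftrightarrow> (\<exists>a\<in>carrier G. insert a (F #> a) \<subseteq> A)" for F
        using True by blast
      then show ?thesis unfolding TG_def topsp FS_def thick_set_def using True by simp
    next
      case False
      then show ?thesis unfolding TG_def topsp by simp
    qed
  qed
  have "openin ?T (?U F)" if F: "F \<in> FS" for F
  proof (rule openin_Union, safe)
    fix a assume a: "a \<in> carrier G"
    have "finite (insert a (F #> a))" using F rc_fin unfolding FS_def by simp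
    moreover have "insert a (F #> a) \<subseteq> carrier G" using F rc_sub a unfolding FS_def by simp
    ultimately show "openin ?T {X. X \<subseteq> carrier G \<and> insert a (F #> a) \<subseteq> X}"
      by (rule basis_open)
  qed
  then show ?thesis unfolding eq using FS_countable[OF assms] by (intro gdelta_INT)
qed

lemma thick_sm:
  assumes A: "A \<subseteq> carrier G" and F: "F \<subseteq> carrier G"
  shows "thick_set G (F <#> A) \<longleftrightarrow> (\<forall>H\<in>FS. \<exists>a\<in>carrier G. \<forall>k\<in>insert a (H #> a). \<exists>f\<in>F. inv f \<otimes> k \<in> A)"
proof -
  have "(\<exists>a\<in>F <#> A. H #> a \<subseteq> F <#> A) \<longleftrightarrow> (\<exists>a\<in>carrier G. \<forall>k\<in>insert a (H #> a). \<exists>f\<in>F. inv f \<otimes> k \<in> A)"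
    if H: "H \<in> FS" for H
  proof
    assume "\<exists>a\<in>F <#> A. H #> a \<subseteq> F <#> A"
    then obtain a where a: "a \<in> F <#> A" "H #> a \<subseteq> F <#> A" by blast
    have "a \<in> carrier G" using a(1) mem_sm[OF A F] by blast
    moreover have "\<forall>k\<in>insert a (H #> a). \<exists>f\<in>F. inv f \<otimes> k \<in> A"
    proof
      fix k assume "k \<in> insert a (H #> a)"
      then have "k \<in> F <#> A" using a by blast
      then show "\<exists>f\<in>F. inv f \<otimes> k \<in> A" by (simp add: mem_sm[OF A F])
    qed
    ultimately show "\<exists>a\<in>carrier G. \<forall>k\<in>insert a (H #> a). \<exists>f\<in>F. inv f \<otimes> k \<in> A" by blast
  next
    assume "\<exists>a\<in>carrier G. \<forall>k\<in>insert a (H #> a). \<exists>f\<in>F. inv f \<otimes> k \<in> A"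
    then obtain a where a: "a \<in> carrier G" "\<forall>k\<in>insert a (H #> a). \<exists>f\<in>F. inv f \<otimes> k \<in> A" by blast
    have "H #> a \<subseteq> carrier G" using rc_sub a(1) H unfolding FS_def by blast
    then have "insert a (H #> a) \<subseteq> F <#> A"
    proof -
      assume Hs: "H #> a \<subseteq> carrier G"
      show ?thesis
      proof
        fix k assume k: "k \<in> insert a (H #> a)"
        then have "k \<in> carrier G" using Hs a(1) by blast
        moreover have "\<exists>f\<in>F. inv f \<otimes> k \<in> A" using a(2) k by blast
        ultimately show "k \<in> F <#> A" by (simp add: mem_sm[OF A F])
      qed
    qed
    then show "\<exists>a\<in>F <#> A. H #> a \<subseteq> F <#> A" by blast
  qed
  note hH = this
  have "thick_set G (F <#> A) \<longleftrightarrow> (\<forall>H\<in>FS. \<exists>a\<in>F <#> A. H #> a \<subseteq> F <#> A)"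
    unfolding thick_set_def FS_def by blast
  also have "\<dots> \<longleftrightarrow> (\<forall>H\<in>FS. \<exists>a\<in>carrier G. \<forall>k\<in>insert a (H #> a). \<exists>f\<in>F. inv f \<otimes> k \<in> A)"
  proof (rule ball_cong[OF refl])
    fix H assume "H \<in> FS"
    then show "(\<exists>a\<in>F <#> A. H #> a \<subseteq> F <#> A) \<longleftrightarrow> (\<exists>a\<in>carrier G. \<forall>k\<in>insert a (H #> a). \<exists>f\<in>F. inv f \<otimes> k \<in> A)"
      by (rule hH)
  qed
  finally show ?thesis .
qed

lemma PT_part: assumes "countable (carrier G)" shows "gdelta_sigma_in (PG_topology G) (PTG G)"
proof -
  let ?T = "PG_topology G"
  let ?V = "\<lambda>F H a. topspace ?T \<inter> (\<Inter>k\<in>insert a (H #> a). \<Union>f\<in>F. inS (inv f \<otimes> k))"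
  let ?W = "\<lambda>F. topspace ?T \<inter> (\<Inter>H\<in>FS. \<Union>a\<in>carrier G. ?V F H a)"
  have eq: "PTG G = (\<Union>F\<in>FS. ?W F)"
  proof (rule Set.set_eqI)
    fix A
    show "A \<in> PTG G \<longleftrightarrow> A \<in> (\<Union>F\<in>FS. ?W F)"
    proof (cases "A \<subseteq> carrier G")
      case True
      have "prethick_set G A \<longleftrightarrow> (\<exists>F\<in>FS. thick_set G (F <#> A))"
        unfolding prethick_set_def FS_def by blast
      also have "\<dots> \<longleftrightarrow> (\<exists>F\<in>FS. (\<forall>H\<in>FS. \<exists>a\<in>carrier G. \<forall>k\<in>insert a (H #> a). \<exists>f\<in>F. inv f \<otimes> k \<in> A))"
      proof (rule bex_cong[OF refl])
        fix F assume "F \<in> FS"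
        then have "F \<subseteq> carrier G" unfolding FS_def by simp
        then show "thick_set G (F <#> A) \<longleftrightarrow> (\<forall>H\<in>FS. \<exists>a\<in>carrier G. \<forall>k\<in>insert a (H #> a). \<exists>f\<in>F. inv f \<otimes> k \<in> A)"
          by (rule thick_sm[OF True])
      qed
      also have "\<dots> \<longleftrightarrow> A \<in> (\<Union>F\<in>FS. ?W F)"
        unfolding topsp inS_def using True by simp
      finally show ?thesis unfolding PTG_def using True by simp
    next
      case False
      then show ?thesis unfolding PTG_def topsp by simp
    qed
  qed
  have "gdelta_in ?T (?W F)" if F: "F \<in> FS" for F
  proof (rule gdelta_INT[OF FS_countable[OF assms]])
    fix H assume H: "H \<in> FS"
    show "openin ?T (\<Union>a\<in>carrier G. ?V F H a)"
    proof (rule openin_Union, safe)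
      fix a assume a: "a \<in> carrier G"
      have "clopen_in ?T (?V F H a)"
      proof (rule clopen_INT)
        show "finite (insert a (H #> a))" using H rc_fin unfolding FS_def by simp
        fix k assume "k \<in> insert a (H #> a)"
        then have k: "k \<in> carrier G" using H rc_sub a unfolding FS_def by blast
        show "clopen_in ?T (\<Union>f\<in>F. inS (inv f \<otimes> k))"
        proof (rule clopen_UN)
          show "finite F" using F unfolding FS_def by simp
          fix f assume "f \<in> F"
          then have "f \<in> carrier G" using F unfolding FS_def by blast
          then show "clopen_in ?T (inS (inv f \<otimes> k))" using k by (intro clopen_inS) simp
        qed
      qed
      then show "openin ?T (?V F H a)" unfolding clopen_in_def by simp
    qed
  qed
  then show ?thesis unfolding eq using FS_countable[OF assms] by (intro gdelta_sigma_UN)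
qed

end


context group begin

lemma large_compl:
  assumes B: "B \<subseteq> carrier G" and F: "F \<subseteq> carrier G"
  shows "large_set G (carrier G - (F <#> B)) \<longleftrightarrow>
    (\<exists>E\<in>FS. \<forall>g\<in>carrier G. \<exists>e\<in>E. \<forall>f\<in>F. inv f \<otimes> (inv e \<otimes> g) \<notin> B)"
proof -
  have D: "carrier G - (F <#> B) \<subseteq> carrier G" by blast
  have k: "(inv e \<otimes> g \<in> carrier G - (F <#> B)) \<longleftrightarrow> (\<forall>f\<in>F. inv f \<otimes> (inv e \<otimes> g) \<notin> B)"
    if "e \<in> carrier G" "g \<in> carrier G" for e g
    using that mem_sm[OF B F, of "inv e \<otimes> g"] by simp
  have cong: "(\<forall>g\<in>carrier G. \<exists>e\<in>E. inv e \<otimes> g \<in> carrier G - (F <#> B)) \<longleftrightarrow>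
     (\<forall>g\<in>carrier G. \<exists>e\<in>E. \<forall>f\<in>F. inv f \<otimes> (inv e \<otimes> g) \<notin> B)" if E: "E \<subseteq> carrier G" for E
  proof (intro ball_cong[OF refl] bex_cong[OF refl])
    fix g e assume "g \<in> carrier G" "e \<in> E"
    then show "(inv e \<otimes> g \<in> carrier G - (F <#> B)) \<longleftrightarrow> (\<forall>f\<in>F. inv f \<otimes> (inv e \<otimes> g) \<notin> B)"
      using E by (intro k) auto
  qed
  show ?thesis
  proof
    assume "large_set G (carrier G - (F <#> B))"
    then obtain E where E: "finite E" "E \<subseteq> carrier G"
      "\<forall>g\<in>carrier G. \<exists>e\<in>E. inv e \<otimes> g \<in> carrier G - (F <#> B)"
      using large_iff[OF D] by blast
    have "\<forall>g\<in>carrier G. \<exists>e\<in>E. \<forall>f\<in>F. inv f \<otimes> (inv e \<otimes> g) \<notin> B"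
      using iffD1[OF cong[OF E(2)] E(3)] .
    moreover have "E \<in> FS" using E unfolding FS_def by simp
    ultimately show "\<exists>E\<in>FS. \<forall>g\<in>carrier G. \<exists>e\<in>E. \<forall>f\<in>F. inv f \<otimes> (inv e \<otimes> g) \<notin> B" by blast
  next
    assume "\<exists>E\<in>FS. \<forall>g\<in>carrier G. \<exists>e\<in>E. \<forall>f\<in>F. inv f \<otimes> (inv e \<otimes> g) \<notin> B"
    then obtain E where E: "E \<in> FS" "\<forall>g\<in>carrier G. \<exists>e\<in>E. \<forall>f\<in>F. inv f \<otimes> (inv e \<otimes> g) \<notin> B"
      by blast
    have E2: "finite E" "E \<subseteq> carrier G" using E(1) unfolding FS_def by auto
    have "\<forall>g\<in>carrier G. \<exists>e\<in>E. inv e \<otimes> g \<in> carrier G - (F <#> B)"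
      using iffD2[OF cong[OF E2(2)] E(2)] .
    with E2 show "large_set G (carrier G - (F <#> B))"
      using large_iff[OF D] by blast
  qed
qed

lemma small_iff2:
  assumes B: "B \<subseteq> carrier G"
  shows "small_set G B \<longleftrightarrow>
    (\<forall>F\<in>FS. \<exists>E\<in>FS. \<forall>g\<in>carrier G. \<exists>e\<in>E. \<forall>f\<in>F. inv f \<otimes> (inv e \<otimes> g) \<notin> B)"
proof -
  have e1: "(\<forall>F. finite F \<and> F \<subseteq> carrier G \<longrightarrow> P F) \<longleftrightarrow> (\<forall>F\<in>FS. P F)" for P
    unfolding FS_def by blast
  have "small_set G B \<longleftrightarrow> (\<forall>F\<in>FS. large_set G (carrier G - (F <#> B)))"
    unfolding small_iff[OF B] by (rule e1)
  also have "\<dots> \<longleftrightarrow> (\<forall>F\<in>FS. \<exists>E\<in>FS. \<forall>g\<in>carrier G. \<exists>e\<in>E. \<forall>f\<in>F. inv f \<otimes> (inv e \<otimes> g) \<notin> B)"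
  proof (rule ball_cong[OF refl])
    fix F assume "F \<in> FS"
    then have "F \<subseteq> carrier G" unfolding FS_def by simp
    then show "large_set G (carrier G - (F <#> B)) \<longleftrightarrow>
      (\<exists>E\<in>FS. \<forall>g\<in>carrier G. \<exists>e\<in>E. \<forall>f\<in>F. inv f \<otimes> (inv e \<otimes> g) \<notin> B)"
      by (rule large_compl[OF B])
  qed
  finally show ?thesis .
qed

lemma fsd_gen:
  assumes cG: "countable (carrier G)" and psi: "\<And>y. y \<in> carrier G \<Longrightarrow> clopen_in (PG_topology G) (\<psi> y)"
  shows "fsigma_delta_in (PG_topology G) (topspace (PG_topology G) \<inter> (\<Inter>F\<in>FS. \<Union>E\<in>FS.
     topspace (PG_topology G) \<inter> (\<Inter>g\<in>carrier G. \<Union>e\<in>E.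
       topspace (PG_topology G) \<inter> (\<Inter>f\<in>F. \<psi> (inv f \<otimes> (inv e \<otimes> g))))))"
proof (rule fsigma_delta_INT[OF FS_countable[OF cG]])
  fix F assume F: "F \<in> FS"
  show "fsigma_in (PG_topology G) (\<Union>E\<in>FS.
     topspace (PG_topology G) \<inter> (\<Inter>g\<in>carrier G. \<Union>e\<in>E.
       topspace (PG_topology G) \<inter> (\<Inter>f\<in>F. \<psi> (inv f \<otimes> (inv e \<otimes> g)))))"
  proof (rule fsigma_UN[OF FS_countable[OF cG]])
    fix E assume E: "E \<in> FS"
    show "closedin (PG_topology G) (topspace (PG_topology G) \<inter> (\<Inter>g\<in>carrier G. \<Union>e\<in>E.
       topspace (PG_topology G) \<inter> (\<Inter>f\<in>F. \<psi> (inv f \<otimes> (inv e \<otimes> g)))))"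
    proof (rule closed_INT)
      fix g assume g: "g \<in> carrier G"
      have "clopen_in (PG_topology G) (\<Union>e\<in>E.
       topspace (PG_topology G) \<inter> (\<Inter>f\<in>F. \<psi> (inv f \<otimes> (inv e \<otimes> g))))"
      proof (rule clopen_UN)
        show "finite E" using E unfolding FS_def by simp
        fix e assume "e \<in> E"
        then have e: "e \<in> carrier G" using E unfolding FS_def by blast
        show "clopen_in (PG_topology G) (topspace (PG_topology G) \<inter> (\<Inter>f\<in>F. \<psi> (inv f \<otimes> (inv e \<otimes> g))))"
        proof (rule clopen_INT)
          show "finite F" using F unfolding FS_def by simp
          fix f assume "f \<in> F"
          then have "f \<in> carrier G" using F unfolding FS_def by blast
          then show "clopen_in (PG_topology G) (\<psi> (inv f \<otimes> (inv e \<otimes> g)))"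
            using e g by (intro psi) simp
        qed
      qed
      then show "closedin (PG_topology G) (\<Union>e\<in>E.
       topspace (PG_topology G) \<inter> (\<Inter>f\<in>F. \<psi> (inv f \<otimes> (inv e \<otimes> g))))"
        unfolding clopen_in_def by simp
    qed
  qed
qed

lemma S_part: assumes "countable (carrier G)" shows "fsigma_delta_in (PG_topology G) (SG G)"
proof -
  let ?T = "PG_topology G"
  let ?\<psi> = "\<lambda>y. {X. X \<subseteq> carrier G \<and> y \<notin> X}"
  have eq: "SG G = topspace ?T \<inter> (\<Inter>F\<in>FS. \<Union>E\<in>FS.
     topspace ?T \<inter> (\<Inter>g\<in>carrier G. \<Union>e\<in>E.
       topspace ?T \<inter> (\<Inter>f\<in>F. ?\<psi> (inv f \<otimes> (inv e \<otimes> g)))))"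
  proof (rule Set.set_eqI)
    fix A
    show "A \<in> SG G \<longleftrightarrow> A \<in> topspace ?T \<inter> (\<Inter>F\<in>FS. \<Union>E\<in>FS.
     topspace ?T \<inter> (\<Inter>g\<in>carrier G. \<Union>e\<in>E.
       topspace ?T \<inter> (\<Inter>f\<in>F. ?\<psi> (inv f \<otimes> (inv e \<otimes> g)))))"
    proof (cases "A \<subseteq> carrier G")
      case True
      show ?thesis using True small_iff2[OF True] by (simp add: SG_def topsp)
    next
      case False
      then show ?thesis unfolding SG_def topsp by simp
    qed
  qed
  have "clopen_in ?T (?\<psi> y)" if "y \<in> carrier G" for y
    using clopen_outS[OF that] unfolding outS_def .
  then show ?thesis unfolding eq by (rule fsd_gen[OF assms])
qed

lemma EL_part: assumes "countable (carrier G)" shows "fsigma_delta_in (PG_topology G) (ELG G)"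
proof -
  let ?T = "PG_topology G"
  let ?\<psi> = "\<lambda>y. {X. X \<subseteq> carrier G \<and> y \<notin> carrier G - X}"
  have eq: "ELG G = topspace ?T \<inter> (\<Inter>F\<in>FS. \<Union>E\<in>FS.
     topspace ?T \<inter> (\<Inter>g\<in>carrier G. \<Union>e\<in>E.
       topspace ?T \<inter> (\<Inter>f\<in>F. ?\<psi> (inv f \<otimes> (inv e \<otimes> g)))))"
  proof (rule Set.set_eqI)
    fix A
    show "A \<in> ELG G \<longleftrightarrow> A \<in> topspace ?T \<inter> (\<Inter>F\<in>FS. \<Union>E\<in>FS.
     topspace ?T \<inter> (\<Inter>g\<in>carrier G. \<Union>e\<in>E.
       topspace ?T \<inter> (\<Inter>f\<in>F. ?\<psi> (inv f \<otimes> (inv e \<otimes> g)))))"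
    proof (cases "A \<subseteq> carrier G")
      case True
      have D: "carrier G - A \<subseteq> carrier G" by blast
      show ?thesis using True small_iff2[OF D]
        by (simp only: ELG_def extralarge_set_def topsp mem_Collect_eq Int_iff INT_iff UN_iff Pow_iff simp_thms)
    next
      case False
      then show ?thesis unfolding ELG_def topsp by simp
    qed
  qed
  have "clopen_in ?T (?\<psi> y)" if "y \<in> carrier G" for y
  proof -
    have "?\<psi> y = inS y" unfolding inS_def using that by blast
    then show ?thesis using clopen_inS[OF that] by simp
  qed
  then show ?thesis unfolding eq by (rule fsd_gen[OF assms])
qed

end

theorem theorem3p1:
  assumes "group G" and "countable (carrier G)"
  shows "fsigma_in (PG_topology G) (LG G)
       \<and> gdelta_in (PG_topology G) (TG G)
       \<and> gdelta_sigma_in (PG_topology G) (PTG G)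
       \<and> fsigma_delta_in (PG_topology G) (SG G)
       \<and> fsigma_delta_in (PG_topology G) (ELG G)"
proof -
  interpret group G by (rule assms(1))
  show ?thesis using L_part[OF assms(2)] T_part[OF assms(2)] PT_part[OF assms(2)]
    S_part[OF assms(2)] EL_part[OF assms(2)] by blast
qed

end
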